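(* Consider the master–worker Markov chain described in the context, where in this lemma the master's auditing probability is allowed to take the value $0$. Let $Z\subseteq W$ be any set of workers such that $WB_Y > a_i$ for every rational worker $i\in Z$. Let $$S=\{\, s \;:\; p_A(s)=0,\ \ p_{Cw}(s)=1 \text{ for all } w\in Z,\ \ \rho_Z(s) > \rho_{W\setminus Z}(s)\,\}.$$ Then: (i) $S$ is a closed untruthful set; and (ii) if $p_A(0)=0$, $\rho_Z(0)>\rho_{W\setminus Z}(0)$, and $p_{Ci}(0)>0$ for all $i\in Z$, then $S$ is reachable (the chain reaches some state of $S$ with positive probability).
   Context: A master interacts in rounds $r=1,2,\dots$ with a set $W$ of $n$ workers; in each round every worker returns an answer to a task with a unique correct result. A worker is honest in a round if it returns the correct result and cheats otherwise; all workers that cheat in a round return the same incorrect value. Each worker has a fixed type: altruistic (always honest, cheating probability constantly $0$), malicious (always cheats, cheating probability constantly $1$), or rational (cheating probability $p_{Ci}$ evolves as below). Nonnegative parameters: $WB_Y$ (reward), $WP_C$ (punishment for being caught cheating), $WC_T$ (cost of computing the task), an aspiration $a_i$ of each worker $i$, learning rates $\alpha_m,\alpha_w>0$, a tolerance $\tau$, and a lower bound $p_A^{min}$ on the auditing probability. Reputation: $aud(r)$ is the number of rounds among $1,\dots,r$ in which the master audited, and $v_i(r)$ the number of those audited rounds in which worker $i$ was honest. The reputation $\rho_i(r)$ of worker $i$ after round $r$ is computed by a fixed reputation scheme from the audit outcomes and changes only in rounds in which the master audits. For $Y\subseteq W$, $\rho_Y(r)=\sum_{i\in Y}\rho_i(r)$.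 Markov chain: the state is $s=\langle p_A(s), aud(s), p_{C1}(s),\dots,p_{Cn}(s), v_1(s),\dots,v_n(s)\rangle$; $s_r$ is the state at the end of round $r$ and $x(r)$ denotes component $x$ of $s_r$. In round $r$, the set of cheaters is exactly $F\subseteq W$ with probability $P_F(r)=\prod_{j\in F}p_{Cj}(r-1)\prod_{k\notin F}(1-p_{Ck}(r-1))$ (independent decisions). Then: - With probability $p_A(r-1)$ the master audits: $aud(r)=aud(r-1)+1$; $v_i(r)=v_i(r-1)+1$ for $i\notin F$ and $v_i(r)=v_i(r-1)$ for $i\in F$; reputations are updated; $p_A(r)=\min\{1,\max\{p_A^{min}, p_A(r-1)+\alpha_m(\rho_F(r)/\rho_W(r)-\tau)\}\}$; each rational $i\in F$ gets $p_{Ci}(r)=p_{Ci}(r-1)-\alpha_w(a_i+WP_C)$; each rational $i\notin F$ gets $p_{Ci}(r)=p_{Ci}(r-1)+\alpha_w(a_i-(WB_Y-WC_T))$. - With probability $1-p_A(r-1)$ the master does not audit: $p_A$, $aud$, all $v_i$ and all reputations are unchanged; the master accepts the answer of $F$ if $\rho_F(r)>\rho_{W\setminus F}(r)$, the answer of $W\setminus F$ if $\rho_F(r)<\rho_{W\setminus F}(r)$, and chooses one of the two by a fair coin flip in case of a tie. Each rational $i\in F$ gets $p_{Ci}(r)=p_{Ci}(r-1)+\alpha_w(WB_Y-a_i)$ if $F$'s answer was accepted and $p_{Ci}(r)=p_{Ci}(r-1)-\alpha_w a_i$ otherwise; each rational $i\notin F$ gets $p_{Ci}(r)=p_{Ci}(r-1)+\alpha_w(a_i+WC_T)$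 if $F$'s answer was accepted and $p_{Ci}(r)=p_{Ci}(r-1)+\alpha_w(a_i-(WB_Y-WC_T))$ otherwise. All cheating probabilities are clipped to $[0,1]$. The initial state $s_0$ is arbitrary subject to $p_A(0)\in[p_A^{min},1]$ and $p_{Ci}(0)\in[0,1]$. Terminology: in a state, a set $X\subseteq W$ is reputable if $\rho_X>\rho_{W\setminus X}$. A worker $i$ is a cheater in state $s$ if $p_{Ci}(s)=1$ and honest if $p_{Ci}(s)=0$. A state is untruthful if the set of cheater workers in it is reputable, and truthful if the set of honest workers in it is reputable; an untruthful (resp. truthful) set is a set of untruthful (resp. truthful) states. A set of states $S$ is closed if once the chain is in a state of $S$ it never moves to a state outside $S$. *)

theory Defs
  imports "HOL-Probability.Probability"
begin

datatype wtype = Altruistic | Malicious | Rational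

record 'w params =
  WBY   :: real
  WPC   :: real
  WCT   :: real
  asp   :: "'w \<Rightarrow> real"
  alpha_m :: real
  alpha_w :: real
  tau   :: real
  pAmin :: real

text \<open>Chain state: auditing probability, number of audits, cheating probabilities,
  number of audited rounds in which each worker was honest.\<close>
record 'w state =
  pA  :: real
  aud :: nat
  pC  :: "'w \<Rightarrow> real"
  v   :: "'w \<Rightarrow> nat"

definition rho :: "(nat \<Rightarrow> nat \<Rightarrow> real) \<Rightarrow> 'w state \<Rightarrow> 'w \<Rightarrow> real" where
  "rho rep s i = rep (aud s) (v s i)"

definition rhoSet :: "(nat \<Rightarrow> nat \<Rightarrow> real) \<Rightarrow> 'w state \<Rightarrow> 'w set \<Rightarrow> real" where
  "rhoSet rep s Y = (\<Sum>i\<in>Y. rho rep s i)"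

definition clip01 :: "real \<Rightarrow> real" where
  "clip01 x = min 1 (max 0 x)"

definition audit_update ::
  "'w params \<Rightarrow> 'w set \<Rightarrow> ('w \<Rightarrow> wtype) \<Rightarrow> (nat \<Rightarrow> nat \<Rightarrow> real)
     \<Rightarrow> 'w set \<Rightarrow> 'w state \<Rightarrow> 'w state" where
  "audit_update P W ty rep F s =
    (let s1 = s\<lparr> aud := Suc (aud s),
                 v := (\<lambda>i. if i \<in> F then v s i else Suc (v s i)) \<rparr>
     in s1\<lparr> pA := min 1 (max (pAmin P)
                  (pA s + alpha_m P * (rhoSet rep s1 F / rhoSet rep s1 W - tau P))),
            pC := (\<lambda>i. if ty i = Rational then
                      clip01 (if i \<in> F then pC s i - alpha_w P * (asp P i + WPC P)
                              else pC s i + alpha_w P * (asp P i - (WBY P - WCT P)))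
                    else pC s i) \<rparr>)"

text \<open>State after a non-audited round with cheater set F; acc says whether
  the answer of F was accepted.\<close>
definition noaudit_update ::
  "'w params \<Rightarrow> ('w \<Rightarrow> wtype) \<Rightarrow> 'w set \<Rightarrow> bool \<Rightarrow> 'w state \<Rightarrow> 'w state" where
  "noaudit_update P ty F acc s =
    s\<lparr> pC := (\<lambda>i. if ty i = Rational then
                  clip01 (if i \<in> F then
                            (if acc then pC s i + alpha_w P * (WBY P - asp P i)
                             else pC s i - alpha_w P * asp P i)
                          else
                            (if acc then pC s i + alpha_w P * (asp P i + WCT P)
                             else pC s i + alpha_w P * (asp P i - (WBY P - WCT P))))
                else pC s i) \<rparr>"

definition step ::
  "'w params \<Rightarrow> 'w set \<Rightarrow> ('w \<Rightarrow> wtype) \<Rightarrow> (nat \<Rightarrow> nat \<Rightarrow> real)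
     \<Rightarrow> 'w state \<Rightarrow> 'w state pmf" where
  "step P W ty rep s =
    bind_pmf (Pi_pmf W False (\<lambda>i. bernoulli_pmf (pC s i))) (\<lambda>f.
      let F = {i \<in> W. f i} in
      bind_pmf (bernoulli_pmf (pA s)) (\<lambda>audit.
        if audit then return_pmf (audit_update P W ty rep F s)
        else bind_pmf (bernoulli_pmf (1/2)) (\<lambda>coin.
          let acc = (if rhoSet rep s F > rhoSet rep s (W - F) then True
                     else if rhoSet rep s F < rhoSet rep s (W - F) then False
                     else coin)
          in return_pmf (noaudit_update P ty F acc s))))"

definition steps ::
  "'w params \<Rightarrow> 'w set \<Rightarrow> ('w \<Rightarrow> wtype) \<Rightarrow> (nat \<Rightarrow> nat \<Rightarrow> real)
     \<Rightarrow> nat \<Rightarrow> 'w state \<Rightarrow> 'w state pmf" where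
  "steps P W ty rep n s0 = ((\<lambda>D. bind_pmf D (step P W ty rep)) ^^ n) (return_pmf s0)"

definition closed_set ::
  "'w params \<Rightarrow> 'w set \<Rightarrow> ('w \<Rightarrow> wtype) \<Rightarrow> (nat \<Rightarrow> nat \<Rightarrow> real)
     \<Rightarrow> 'w state set \<Rightarrow> bool" where
  "closed_set P W ty rep S \<longleftrightarrow> (\<forall>s\<in>S. set_pmf (step P W ty rep s) \<subseteq> S)"

definition reputable :: "'w set \<Rightarrow> (nat \<Rightarrow> nat \<Rightarrow> real) \<Rightarrow> 'w state \<Rightarrow> 'w set \<Rightarrow> bool" where
  "reputable W rep s X \<longleftrightarrow> rhoSet rep s X > rhoSet rep s (W - X)"

definition cheaters :: "'w set \<Rightarrow> 'w state \<Rightarrow> 'w set" where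
  "cheaters W s = {i \<in> W. pC s i = 1}"

definition untruthful :: "'w set \<Rightarrow> (nat \<Rightarrow> nat \<Rightarrow> real) \<Rightarrow> 'w state \<Rightarrow> bool" where
  "untruthful W rep s \<longleftrightarrow> reputable W rep s (cheaters W s)"

definition untruthful_set :: "'w set \<Rightarrow> (nat \<Rightarrow> nat \<Rightarrow> real) \<Rightarrow> 'w state set \<Rightarrow> bool" where
  "untruthful_set W rep S \<longleftrightarrow> (\<forall>s\<in>S. untruthful W rep s)"

definition reachable ::
  "'w params \<Rightarrow> 'w set \<Rightarrow> ('w \<Rightarrow> wtype) \<Rightarrow> (nat \<Rightarrow> nat \<Rightarrow> real)
     \<Rightarrow> 'w state \<Rightarrow> 'w state set \<Rightarrow> bool" where
  "reachable P W ty rep s0 S \<longleftrightarrow> (\<exists>n. measure_pmf.prob (steps P W ty rep n s0) S > 0)"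

definition valid_init :: "'w params \<Rightarrow> 'w set \<Rightarrow> ('w \<Rightarrow> wtype) \<Rightarrow> 'w state \<Rightarrow> bool" where
  "valid_init P W ty s \<longleftrightarrow> pAmin P \<le> pA s \<and> pA s \<le> 1 \<and>
     (\<forall>i\<in>W. 0 \<le> pC s i \<and> pC s i \<le> 1 \<and>
        (ty i = Altruistic \<longrightarrow> pC s i = 0) \<and> (ty i = Malicious \<longrightarrow> pC s i = 1))"

definition valid_params :: "'w params \<Rightarrow> 'w set \<Rightarrow> bool" where
  "valid_params P W \<longleftrightarrow> 0 \<le> WBY P \<and> 0 \<le> WPC P \<and> 0 \<le> WCT P \<and> (\<forall>i\<in>W. 0 \<le> asp P i)
     \<and> 0 < alpha_m P \<and> 0 < alpha_w P \<and> 0 \<le> tau P \<and> 0 \<le> pAmin P"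

end

theory Submission imports Defs begin

lemma bern1: "set_pmf (bernoulli_pmf 1) = {True}"
proof -
  have "False \<notin> set_pmf (bernoulli_pmf 1)" by (simp add: set_pmf_iff)
  moreover have "True \<in> set_pmf (bernoulli_pmf 1)" by (simp add: set_pmf_iff)
  ultimately show ?thesis by (intro set_eqI, case_tac x, auto)
qed

lemma bern0: "set_pmf (bernoulli_pmf 0) = {False}"
proof -
  have "True \<notin> set_pmf (bernoulli_pmf 0)" by (simp add: set_pmf_iff)
  moreover have "False \<in> set_pmf (bernoulli_pmf 0)" by (simp add: set_pmf_iff)
  ultimately show ?thesis by (intro set_eqI, case_tac x, auto)
qed

lemma bind_bern0: "set_pmf (bind_pmf (bernoulli_pmf 0) g) = set_pmf (g False)"
  by (simp add: set_bind_pmf bern0)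

lemma bernT: "0 < p \<Longrightarrow> p \<le> 1 \<Longrightarrow> True \<in> set_pmf (bernoulli_pmf p)"
  by (simp add: set_pmf_iff)
lemma bernF: "0 \<le> p \<Longrightarrow> p < 1 \<Longrightarrow> False \<in> set_pmf (bernoulli_pmf p)"
  by (simp add: set_pmf_iff)

lemma step_support:
  assumes "finite W" "pA s = 0" "s' \<in> set_pmf (step P W ty rep s)"
  shows "\<exists>F coin. F \<subseteq> W \<and> (\<forall>i\<in>W. pC s i = 1 \<longrightarrow> i \<in> F) \<and>
     s' = noaudit_update P ty F (if rhoSet rep s F > rhoSet rep s (W - F) then True
                     else if rhoSet rep s F < rhoSet rep s (W - F) then False
                     else coin) s"
proof -
  let ?acc = "\<lambda>F coin. (if rhoSet rep s F > rhoSet rep s (W - F) then True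
                     else if rhoSet rep s F < rhoSet rep s (W - F) then False
                     else coin)"
  from assms(3) obtain f where f: "f \<in> PiE_dflt W False (set_pmf \<circ> (\<lambda>i. bernoulli_pmf (pC s i)))"
    and s': "s' \<in> set_pmf (let F = {i \<in> W. f i} in
      bind_pmf (bernoulli_pmf (pA s)) (\<lambda>audit.
        if audit then return_pmf (audit_update P W ty rep F s)
        else bind_pmf (bernoulli_pmf (1/2)) (\<lambda>coin.
          let acc = ?acc F coin
          in return_pmf (noaudit_update P ty F acc s))))"
    unfolding step_def using assms(1) by (auto simp: set_Pi_pmf)
  define F where "F = {i \<in> W. f i}"
  have s'': "s' \<in> set_pmf (bind_pmf (bernoulli_pmf (1/2)) (\<lambda>coin. return_pmf (noaudit_update P ty F (?acc F coin) s)))"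
    using s' unfolding F_def[symmetric] Let_def assms(2) bind_bern0 if_False .
  then obtain coin where c: "s' = noaudit_update P ty F (?acc F coin) s"
    unfolding set_bind_pmf set_return_pmf by blast
  have "\<forall>i\<in>W. pC s i = 1 \<longrightarrow> i \<in> F"
    using f by (auto simp: F_def PiE_dflt_def bern1)
  moreover have "F \<subseteq> W" by (auto simp: F_def)
  ultimately show ?thesis using c by blast
qed

lemma step_choose:
  assumes "finite W" "pA s = 0" "F \<subseteq> W" "\<forall>i\<in>W. 0 \<le> pC s i \<and> pC s i \<le> 1"
    "\<forall>i\<in>F. pC s i > 0" "\<forall>i\<in>W - F. pC s i < 1" "rhoSet rep s F > rhoSet rep s (W - F)"
  shows "noaudit_update P ty F True s \<in> set_pmf (step P W ty rep s)"
proof -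
  define f where "f i = (i \<in> F)" for i
  have f: "f \<in> PiE_dflt W False (set_pmf \<circ> (\<lambda>i. bernoulli_pmf (pC s i)))"
  proof -
    have "f i \<in> set_pmf (bernoulli_pmf (pC s i))" if "i \<in> W" for i
    proof (cases "i \<in> F")
      case True thus ?thesis using assms(4,5) that by (auto simp: f_def intro!: bernT)
    next
      case False thus ?thesis using assms(4,6) that by (auto simp: f_def intro!: bernF)
    qed
    thus ?thesis using assms(3) by (auto simp: PiE_dflt_def f_def)
  qed
  have FF: "{i \<in> W. f i} = F" using assms(3) by (auto simp: f_def)
  have h: "(1/2::real) > 0" by simp
  show ?thesis unfolding step_def
    apply (simp add: set_Pi_pmf assms(1))
    apply (rule bexI[OF _ f[simplified]])
    using assms(7) bernT[OF h] by (auto simp: FF assms(2) bern0 Let_def)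
qed

lemma rho_noaudit: "rhoSet rep (noaudit_update P ty F acc s) X = rhoSet rep s X"
  by (simp add: rhoSet_def rho_def noaudit_update_def)

lemma rho_mono:
  assumes "finite W" "\<And>k m. 0 \<le> rep k m" "Z \<subseteq> F" "F \<subseteq> W"
  shows "rhoSet rep s Z \<le> rhoSet rep s F" "rhoSet rep s (W - F) \<le> rhoSet rep s (W - Z)"
  unfolding rhoSet_def using assms
  by (auto intro!: sum_mono2 simp: rho_def intro: finite_subset)


lemma rho_same: "aud s = aud t \<Longrightarrow> v s = v t \<Longrightarrow> rhoSet rep s X = rhoSet rep t X"
  by (simp add: rhoSet_def rho_def)

lemma pos_lb:
  fixes g :: "'a \<Rightarrow> real"
  assumes "finite A" "\<forall>i\<in>A. g i > 0"
  shows "\<exists>d>0. \<forall>i\<in>A. d \<le> g i"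
proof -
  let ?M = "insert 1 (g ` A)"
  have "finite ?M" using assms(1) by simp
  hence "Min ?M > 0" using assms(2) by (subst Min_gr_iff) auto
  moreover have "\<forall>i\<in>A. Min ?M \<le> g i" using \<open>finite ?M\<close> by (auto intro: Min_le)
  ultimately show ?thesis by blast
qed

lemma steps_Suc: "steps P W ty rep (Suc n) s0 = bind_pmf (steps P W ty rep n s0) (step P W ty rep)"
  by (simp add: steps_def)

lemma steps_0: "steps P W ty rep 0 s0 = return_pmf s0"
  by (simp add: steps_def)

theorem lemma1:
  fixes P :: "'w params" and W Z :: "'w set" and ty :: "'w \<Rightarrow> wtype"
    and rep :: "nat \<Rightarrow> nat \<Rightarrow> real" and S :: "'w state set"
  assumes "finite W" and "valid_params P W" and "pAmin P = 0"
    and "\<And>k m. 0 \<le> rep k m"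
    and "Z \<subseteq> W"
    and "\<And>i. i \<in> Z \<Longrightarrow> ty i = Rational \<Longrightarrow> WBY P > asp P i"
    and "S = {s. pA s = 0 \<and> (\<forall>w\<in>Z. pC s w = 1) \<and> rhoSet rep s Z > rhoSet rep s (W - Z)}"
  shows "(closed_set P W ty rep S \<and> untruthful_set W rep S) \<and>
         (\<forall>s0. valid_init P W ty s0 \<and> pA s0 = 0 \<and> rhoSet rep s0 Z > rhoSet rep s0 (W - Z)
               \<and> (\<forall>i\<in>Z. pC s0 i > 0) \<longrightarrow> reachable P W ty rep s0 S)"
proof (intro conjI allI impI)
  have aw: "alpha_w P > 0" using assms(2) by (simp add: valid_params_def)
  show "closed_set P W ty rep S" unfolding closed_set_def
  proof (intro ballI subsetI)
    fix s s' assume sS: "s \<in> S" and s': "s' \<in> set_pmf (step P W ty rep s)"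
    have pA: "pA s = 0" and z1: "\<forall>w\<in>Z. pC s w = 1" and r: "rhoSet rep s Z > rhoSet rep s (W - Z)"
      using sS assms(7) by auto
    obtain F coin where F: "F \<subseteq> W" "\<forall>i\<in>W. pC s i = 1 \<longrightarrow> i \<in> F"
      and s'eq: "s' = noaudit_update P ty F (if rhoSet rep s F > rhoSet rep s (W - F) then True
                     else if rhoSet rep s F < rhoSet rep s (W - F) then False
                     else coin) s"
      using step_support[OF assms(1) pA s'] by blast
    have ZF: "Z \<subseteq> F" using F(2) z1 assms(5) by auto
    have "rhoSet rep s F > rhoSet rep s (W - F)"
      using rho_mono[where rep=rep, OF assms(1,4) ZF F(1), where s=s] r by linarith
    hence s'eq2: "s' = noaudit_update P ty F True s" using s'eq by simp
    have "\<forall>w\<in>Z. pC s' w = 1"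
    proof
      fix w assume w: "w \<in> Z"
      show "pC s' w = 1"
      proof (cases "ty w = Rational")
        case True
        have "1 + alpha_w P * (WBY P - asp P w) \<ge> 1"
          using assms(6)[OF w True] aw by simp
        thus ?thesis using True w ZF z1 unfolding s'eq2 noaudit_update_def clip01_def by auto
      next
        case False thus ?thesis using w z1 unfolding s'eq2 noaudit_update_def by auto
      qed
    qed
    moreover have "pA s' = 0" using pA s'eq2 by (simp add: noaudit_update_def)
    ultimately show "s' \<in> S" using r assms(7) s'eq2 by (simp add: rho_noaudit)
  qed
  show "untruthful_set W rep S" unfolding untruthful_set_def untruthful_def reputable_def
  proof
    fix s assume sS: "s \<in> S"
    have z1: "\<forall>w\<in>Z. pC s w = 1" and r: "rhoSet rep s Z > rhoSet rep s (W - Z)"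
      using sS assms(7) by auto
    have ZF: "Z \<subseteq> cheaters W s" and FW: "cheaters W s \<subseteq> W"
      using z1 assms(5) by (auto simp: cheaters_def)
    show "rhoSet rep s (cheaters W s) > rhoSet rep s (W - cheaters W s)"
      using rho_mono[where rep=rep, OF assms(1,4) ZF FW, where s=s] r by linarith
  qed
  fix s0 assume H: "valid_init P W ty s0 \<and> pA s0 = 0 \<and> rhoSet rep s0 Z > rhoSet rep s0 (W - Z)
               \<and> (\<forall>i\<in>Z. pC s0 i > 0)"
  have fZ: "finite {i\<in>Z. ty i = Rational}" using assms(1,5) finite_subset by fastforce
  obtain d where d: "d > 0" "\<forall>i\<in>{i\<in>Z. ty i = Rational}. d \<le> alpha_w P * (WBY P - asp P i)"
    using pos_lb[OF fZ, of "\<lambda>i. alpha_w P * (WBY P - asp P i)"] assms(6) aw by auto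
  define Q where "Q n (s::'w state) \<longleftrightarrow> pA s = 0 \<and> aud s = aud s0 \<and> v s = v s0 \<and>
     (\<forall>i\<in>W. 0 \<le> pC s i \<and> pC s i \<le> 1) \<and> (\<forall>i\<in>Z. pC s i > 0) \<and>
     (\<forall>i\<in>Z. ty i \<noteq> Rational \<longrightarrow> pC s i = 1) \<and>
     (\<forall>i\<in>Z. ty i = Rational \<longrightarrow> min 1 (real n * d) \<le> pC s i)" for n s
  have inv: "\<exists>s\<in>set_pmf (steps P W ty rep n s0). Q n s" for n
  proof (induction n)
    case 0
    have "Q 0 s0" unfolding Q_def
    proof (intro conjI ballI impI)
      fix i assume i: "i \<in> Z" "ty i \<noteq> Rational"
      then show "pC s0 i = 1" using H assms(5) unfolding valid_init_def
        by (cases "ty i") force+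
    qed (use H assms(5) in \<open>auto simp: valid_init_def\<close>)
    thus ?case by (simp add: steps_0)
  next
    case (Suc n)
    then obtain s where s: "s \<in> set_pmf (steps P W ty rep n s0)" and Qs: "Q n s" by blast
    have rs: "rhoSet rep s X = rhoSet rep s0 X" for X
      using Qs by (intro rho_same) (auto simp: Q_def)
    define F where "F = {i\<in>W. pC s i > 0}"
    have ZF: "Z \<subseteq> F" and FW: "F \<subseteq> W" using Qs assms(5) by (auto simp: Q_def F_def)
    have rF: "rhoSet rep s F > rhoSet rep s (W - F)"
      using rho_mono[where rep=rep, OF assms(1,4) ZF FW, where s=s] H rs by (metis order.strict_trans1 order.strict_trans2)
    have s'in: "noaudit_update P ty F True s \<in> set_pmf (step P W ty rep s)"
      apply (rule step_choose[OF assms(1) _ FW _ _ _ rF])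
      using Qs by (auto simp: Q_def F_def)
    have "Q (Suc n) (noaudit_update P ty F True s)"
      unfolding Q_def
    proof (intro conjI ballI impI)
      fix i assume i: "i \<in> Z" "ty i = Rational"
      have iF: "i \<in> F" using i ZF by auto
      have x: "pC s i + alpha_w P * (WBY P - asp P i) \<ge> pC s i + d" using d i by auto
      have m: "min 1 (real n * d) \<le> pC s i" "pC s i \<le> 1" "pC s i > 0"
        using Qs i assms(5) by (auto simp: Q_def)
      have "min 1 (real (Suc n) * d) \<le> pC s i + d"
        using m d(1) by (auto simp: algebra_simps min_def split: if_splits)
      thus "min 1 (real (Suc n) * d) \<le> pC (noaudit_update P ty F True s) i"
        using i iF x m by (auto simp: noaudit_update_def clip01_def min_def max_def)
    next
      fix i assume i: "i \<in> Z" "ty i \<noteq> Rational"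
      thus "pC (noaudit_update P ty F True s) i = 1" using Qs by (auto simp: Q_def noaudit_update_def)
    next
      fix i assume i: "i \<in> Z"
      show "pC (noaudit_update P ty F True s) i > 0"
      proof (cases "ty i = Rational")
        case True
        have iF: "i \<in> F" using i ZF by auto
        have x: "pC s i + alpha_w P * (WBY P - asp P i) \<ge> pC s i + d" using d i True by auto
        have "pC s i > 0" using Qs i by (auto simp: Q_def)
        thus ?thesis using True iF x d by (auto simp: noaudit_update_def clip01_def min_def max_def)
      next
        case False thus ?thesis using Qs i by (auto simp: Q_def noaudit_update_def)
      qed
    qed (use Qs in \<open>auto simp: Q_def noaudit_update_def clip01_def\<close>)
    moreover have "noaudit_update P ty F True s \<in> set_pmf (steps P W ty rep (Suc n) s0)"
      using s s'in by (auto simp: steps_Suc)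
    ultimately show ?case by blast
  qed
  obtain n where n: "1 < real n * d" using ex_less_of_nat_mult[OF d(1)] by blast
  obtain s where s: "s \<in> set_pmf (steps P W ty rep n s0)" and Qs: "Q n s" using inv by blast
  have "s \<in> S"
  proof -
    have "\<forall>w\<in>Z. pC s w = 1"
    proof
      fix w assume w: "w \<in> Z"
      show "pC s w = 1"
      proof (cases "ty w = Rational")
        case True
        hence "min 1 (real n * d) \<le> pC s w" "pC s w \<le> 1" using Qs w assms(5) by (auto simp: Q_def)
        thus ?thesis using n by (simp add: min_def split: if_splits)
      next
        case False thus ?thesis using Qs w by (auto simp: Q_def)
      qed
    qed
    moreover have "rhoSet rep s X = rhoSet rep s0 X" for X
      using Qs by (intro rho_same) (auto simp: Q_def)
    ultimately show ?thesis using Qs H assms(7) by (auto simp: Q_def)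
  qed
  thus "reachable P W ty rep s0 S" unfolding reachable_def
    using measure_pmf_posI[OF s] by blast
qed

end
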